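(* Fix $K,n\in\mathbb{N}$ and $C>0$, and let $X\in[0,C]^K$ and $Y\subseteq[K]$ be (not necessarily independent) random variables with $Y\neq\emptyset$ almost surely. For $V,V_0\in\mathbb{R}^K$ define $f(X,Y;V)=\max_{k\in Y}\{X(k)+V(k)\}$ and $\Delta f(X,Y;V,V_0)=f(X,Y;V)-f(X,Y;V_0)$. Let $\{(X_i,Y_i)\}_{i\in[n]}$ be $n$ i.i.d. samples from the joint distribution of $(X,Y)$. Then for any $\delta\in(0,1)$, $V_0\in\mathbb{R}^K$ and $\alpha\in(0,1]$, with probability at least $1-\delta$, simultaneously for all $V\in\mathbb{R}^K$ with $V-V_0\in[0,C]^K$, $$\frac1n\sum_{i=1}^n\Delta f(X_i,Y_i;V,V_0)\le(1+\alpha)\mathbb{E}[\Delta f(X,Y;V,V_0)]+\frac{2CK\ln\frac{3n}{\delta}}{\alpha n}.$$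
   Context: $[K]=\{1,\dots,K\}$; $[0,C]^K$ is the set of vectors with all entries in $[0,C]$. *)

theory Defs
  imports "HOL-Probability.Probability"
begin

text \<open>f(X,Y;V) = max over k in Y of X(k) + V(k); vectors in R^K are functions nat => real
  of which only the coordinates 1..K matter.\<close>
definition fmax :: "(nat \<Rightarrow> real) \<Rightarrow> nat set \<Rightarrow> (nat \<Rightarrow> real) \<Rightarrow> real" where
  "fmax x y V = Max ((\<lambda>k. x k + V k) ` y)"

definition dfmax :: "(nat \<Rightarrow> real) \<Rightarrow> nat set \<Rightarrow> (nat \<Rightarrow> real) \<Rightarrow> (nat \<Rightarrow> real) \<Rightarrow> real" where
  "dfmax x y V V0 = fmax x y V - fmax x y V0"

end

theory Submission
  imports Defs
begin

lemma ln_lower_aux: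
  fixes a :: real assumes "0 \<le> a"
  shows "2 * a / (2 + a) \<le> ln (1 + a)"
proof -
  define h where "h = (\<lambda>x::real. ln (1 + x) - 2 * x / (2 + x))"
  have d: "\<And>x. 0 \<le> x \<Longrightarrow> (h has_real_derivative (1/(1+x) - 4/(2+x)^2)) (at x)"
    unfolding h_def
    by (auto intro!: derivative_eq_intros simp: field_simps power2_eq_square)
  have nn: "\<And>x::real. 0 \<le> x \<Longrightarrow> 0 \<le> 1/(1+x) - 4/(2+x)^2"
  proof -
    fix x :: real assume "0 \<le> x"
    have "4 * (1 + x) \<le> (2+x)^2" by (simp add: power2_eq_square algebra_simps)
    then have "4/(2+x)^2 \<le> 1/(1+x)" using \<open>0 \<le> x\<close> by (simp add: field_simps)
    then show "0 \<le> 1/(1+x) - 4/(2+x)^2" by simp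
  qed
  have "h 0 \<le> h a"
    by (rule DERIV_nonneg_imp_nondecreasing[OF assms]) (use d nn in blast)
  then show ?thesis by (simp add: h_def)
qed

lemma ln9: "2 \<le> ln (9::real)"
proof -
  have "exp (2::real) = exp 1 * exp 1" by (simp flip: exp_add)
  also have "\<dots> \<le> 3 * 3" using exp_le by (intro mult_mono) auto
  finally show ?thesis by (subst ln_ge_iff) auto
qed

lemma final_arith:
  fixes C \<alpha> \<delta> :: real and K n :: nat
  assumes C: "C > 0" and a: "0 < \<alpha>" "\<alpha> \<le> 1" and d: "0 < \<delta>" "\<delta> < 1" and K: "K \<ge> 1" and n: "n \<ge> 3"
  shows "(1+\<alpha>) * (C / real (2*n)) + C * ln (real ((2*n+1)^K) / \<delta>) / ln (1+\<alpha>) / real n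
         \<le> 2 * C * real K * ln (3 * real n / \<delta>) / (\<alpha> * real n)"
proof -
  define A where "A = - ln \<delta>"
  define l where "l = ln (3 * real n)"
  define L where "L = ln (1+\<alpha>)"
  have A: "A > 0" using d by (simp add: A_def)
  have l9: "l \<ge> 2"
  proof -
    have "ln 9 \<le> l" unfolding l_def using n by (subst ln_le_cancel_iff) auto
    then show ?thesis using ln9 by linarith
  qed
  have L0: "2 * \<alpha> / (2 + \<alpha>) \<le> L" using ln_lower_aux[of \<alpha>] a by (simp add: L_def)
  have Lpos: "L > 0" using a by (simp add: L_def)
  have e1: "ln (real ((2*n+1)^K) / \<delta>) = real K * ln (real (2*n+1)) + A"
    using d by (simp add: ln_div ln_realpow A_def)
  have e2: "ln (3 * real n / \<delta>) = l + A"
    using d n by (simp add: ln_div l_def A_def)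
  have lnle: "ln (real (2*n+1)) \<le> l" unfolding l_def using n by (subst ln_le_cancel_iff) auto
  have B: "real K * ln (real (2*n+1)) + A \<le> real K * l + A"
    using lnle K by (simp add: mult_left_mono)
  have Bnn: "0 \<le> real K * ln (real (2*n+1)) + A" using A by simp
  have inv: "1 / L \<le> (2 + \<alpha>) / (2 * \<alpha>)"
    using L0 a Lpos by (simp add: field_simps)
  have "(real K * ln (real (2*n+1)) + A) / L \<le> (real K * l + A) * ((2 + \<alpha>) / (2 * \<alpha>))"
  proof -
    have "(real K * ln (real (2*n+1)) + A) / L = (real K * ln (real (2*n+1)) + A) * (1 / L)" by simp
    also have "\<dots> \<le> (real K * l + A) * ((2 + \<alpha>) / (2 * \<alpha>))"
      using B Bnn inv a Lpos by (intro mult_mono) auto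
    finally show ?thesis .
  qed
  moreover have key: "\<alpha> * (1+\<alpha>) + (real K * l + A) * (2 + \<alpha>) \<le> 4 * real K * (l + A)"
  proof -
    have "\<alpha> * \<alpha> \<le> 1 * 1" using a by (intro mult_mono) auto
    then have h1: "\<alpha> * (1+\<alpha>) \<le> 2" using a by (simp add: algebra_simps)
    have h2: "2 \<le> real K * l * (2 - \<alpha>)"
    proof -
      have "2 \<le> l * 1" using l9 by simp
      also have "\<dots> \<le> (real K * l) * (2 - \<alpha>)" using K a l9
        by (intro mult_mono) (auto intro: order_trans[OF _ mult_right_mono[of 1 "real K" l]])
      finally show ?thesis by simp
    qed
    have h3: "0 \<le> A * (4 * real K - 2 - \<alpha>)" using A K a by simp
    show ?thesis using h1 h2 h3 by (simp add: algebra_simps)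
  qed
  ultimately have "(1+\<alpha>)/2 + (real K * ln (real (2*n+1)) + A) / L \<le> 2 * real K * (l + A) / \<alpha>"
    using a by (simp add: field_simps) 
  then have "C / real n * ((1+\<alpha>)/2 + (real K * ln (real (2*n+1)) + A) / L)
      \<le> C / real n * (2 * real K * (l + A) / \<alpha>)"
    using C n by (intro mult_left_mono) auto
  moreover have "(1+\<alpha>) * (C / real (2*n)) + C * (real K * ln (real (2*n+1)) + A) / L / real n
     = C / real n * ((1+\<alpha>)/2 + (real K * ln (real (2*n+1)) + A) / L)"
    using n Lpos by (simp add: field_simps)
  moreover have "2 * C * real K * (l + A) / (\<alpha> * real n) = C / real n * (2 * real K * (l + A) / \<alpha>)"
    using n a by (simp add: field_simps)
  ultimately show ?thesis unfolding e1 e2 L_def[symmetric] by linarith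
qed

lemma chernoff:
  fixes M :: "'a measure" and Z :: "'a \<Rightarrow> real" and I :: "'i set"
  assumes MP: "prob_space M" and Zm[measurable]: "Z \<in> borel_measurable M"
    and Zb: "\<And>\<xi>. \<xi> \<in> space M \<Longrightarrow> 0 \<le> Z \<xi> \<and> Z \<xi> \<le> C"
    and C: "C > 0" and a: "0 < \<alpha>" and I: "finite I" and N: "N > 0" and d: "\<delta> > 0"
  shows "measure (PiM I (\<lambda>_. M)) {\<omega> \<in> space (PiM I (\<lambda>_. M)).
           (\<Sum>i\<in>I. Z (\<omega> i)) > real (card I) * (1+\<alpha>) * (\<integral>\<xi>. Z \<xi> \<partial>M) + C * ln (N/\<delta>) / ln (1+\<alpha>)}
         \<le> \<delta> / N"
proof -
  interpret M: prob_space M by (rule MP)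
  let ?P = "PiM I (\<lambda>_. M)"
  interpret P: prob_space ?P by (rule prob_space_PiM) (rule MP)
  interpret PS: product_sigma_finite "\<lambda>_. M"
    by (simp add: product_sigma_finite_def M.sigma_finite_measure_axioms)
  define L where "L = ln (1+\<alpha>)"
  have Lpos: "L > 0" using a by (simp add: L_def)
  have L1: "\<alpha> \<le> L * (1+\<alpha>)"
  proof -
    have "2 * \<alpha> / (2 + \<alpha>) \<le> L" using ln_lower_aux[of \<alpha>] a by (simp add: L_def)
    moreover have "\<alpha> / (1+\<alpha>) \<le> 2 * \<alpha> / (2 + \<alpha>)" using a by (simp add: field_simps)
    ultimately have "\<alpha> / (1+\<alpha>) \<le> L" by linarith
    then show ?thesis using a by (simp add: field_simps)
  qed
  define lam where "lam = L / C"
  have lam: "lam > 0" using Lpos C by (simp add: lam_def)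
  have elC: "exp (lam * C) = 1 + \<alpha>" using C a by (simp add: lam_def L_def)
  define \<mu> where "\<mu> = (\<integral>\<xi>. Z \<xi> \<partial>M)"
  have Zint: "integrable M Z"
    by (rule M.integrable_const_bound[where B=C]) (use Zb in \<open>auto intro!: AE_I2\<close>)
  have mu0: "0 \<le> \<mu>" unfolding \<mu>_def using Zb by (intro integral_nonneg_AE AE_I2) auto
  have Eint: "integrable M (\<lambda>\<xi>. exp (lam * Z \<xi>))"
    by (rule M.integrable_const_bound[where B="exp (lam * C)"]) (use Zb lam in \<open>auto intro!: AE_I2\<close>)
  define m where "m = (\<integral>\<xi>. exp (lam * Z \<xi>) \<partial>M)"
  have m0: "0 \<le> m" unfolding m_def by (intro integral_nonneg_AE AE_I2) auto
  have pw: "exp (lam * z) \<le> 1 + \<alpha> / C * z" if z: "0 \<le> z" "z \<le> C" for z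
  proof -
    define t where "t = z / C"
    have t: "0 \<le> t" "t \<le> 1" using z C by (auto simp: t_def)
    have "exp (lam * ((1 - t) *\<^sub>R 0 + t *\<^sub>R C)) \<le> (1 - t) * exp (lam * 0) + t * exp (lam * C)"
      using t lam by (intro convex_onD[OF convex_on_exp]) auto
    also have "(1 - t) *\<^sub>R 0 + t *\<^sub>R C = z" using C by (simp add: t_def)
    also have "(1 - t) * exp (lam * 0) + t * exp (lam * C) = 1 + \<alpha> / C * z"
      using C by (simp only: elC) (simp add: t_def field_simps)
    finally show ?thesis .
  qed
  have "m \<le> (\<integral>\<xi>. 1 + \<alpha> / C * Z \<xi> \<partial>M)"
    unfolding m_def using Zint Eint pw Zb by (intro integral_mono) auto
  also have "\<dots> = 1 + \<alpha> / C * \<mu>"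
    using Zint by (simp add: \<mu>_def M.prob_space)
  also have "\<dots> \<le> exp (\<alpha> / C * \<mu>)" by (rule exp_ge_add_one_self)
  finally have mle: "m \<le> exp (\<alpha> / C * \<mu>)" .
  define u where "u = (\<lambda>\<omega>. \<Prod>i\<in>I. exp (lam * Z (\<omega> i)))"
  have uint: "integrable ?P u"
    unfolding u_def by (rule PS.product_integrable_prod[OF I]) (rule Eint)
  have uI: "(\<integral>\<omega>. u \<omega> \<partial>?P) = m ^ card I"
    unfolding u_def m_def by (subst PS.product_integral_prod[OF I]) (auto intro: Eint)
  also have "\<dots> \<le> exp (\<alpha> / C * \<mu>) ^ card I" using m0 mle by (intro power_mono)
  also have "\<dots> = exp (real (card I) * (\<alpha> / C * \<mu>))" by (simp only: exp_of_nat_mult)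
  also have "\<dots> \<le> exp (lam * (real (card I) * (1+\<alpha>) * \<mu>))"
  proof -
    have "\<alpha> * \<mu> \<le> (L * (1+\<alpha>)) * \<mu>" using L1 mu0 by (rule mult_right_mono)
    then have "\<alpha> / C * \<mu> \<le> lam * ((1+\<alpha>) * \<mu>)"
      using C by (simp add: lam_def field_simps)
    then have "real (card I) * (\<alpha> / C * \<mu>) \<le> real (card I) * (lam * ((1+\<alpha>) * \<mu>))"
      by (rule mult_left_mono) simp
    then show ?thesis by (simp add: ac_simps)
  qed
  finally have uIle: "(\<integral>\<omega>. u \<omega> \<partial>?P) \<le> exp (lam * (real (card I) * (1+\<alpha>) * \<mu>))" .
  define s where "s = C * ln (N/\<delta>) / L"
  define t where "t = real (card I) * (1+\<alpha>) * \<mu> + s"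
  have "{\<omega> \<in> space ?P. (\<Sum>i\<in>I. Z (\<omega> i)) > t} \<subseteq> {\<omega> \<in> space ?P. u \<omega> \<ge> exp (lam * t)}"
  proof safe
    fix \<omega> assume "t < (\<Sum>i\<in>I. Z (\<omega> i))"
    then have "exp (lam * t) \<le> exp (lam * (\<Sum>i\<in>I. Z (\<omega> i)))" using lam by simp
    also have "\<dots> = u \<omega>" unfolding u_def by (simp add: sum_distrib_left exp_sum[OF I])
    finally show "exp (lam * t) \<le> u \<omega>" .
  qed
  then have "measure ?P {\<omega> \<in> space ?P. (\<Sum>i\<in>I. Z (\<omega> i)) > t}
      \<le> measure ?P {\<omega> \<in> space ?P. u \<omega> \<ge> exp (lam * t)}"
    using uint by (intro P.finite_measure_mono) auto
  also have "\<dots> \<le> (\<integral>\<omega>. u \<omega> \<partial>?P) / exp (lam * t)"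
    using uint by (intro integral_Markov_inequality_measure[where A="space ?P"])
      (auto simp: u_def intro!: AE_I2 prod_nonneg)
  also have "\<dots> \<le> exp (lam * (real (card I) * (1+\<alpha>) * \<mu>)) / exp (lam * t)"
    using uIle by (intro divide_right_mono) auto
  also have "\<dots> = exp (- (lam * s))" by (simp add: t_def algebra_simps flip: exp_diff)
  also have "lam * s = ln (N / \<delta>)" using C Lpos by (simp add: lam_def s_def)
  also have "exp (- ln (N / \<delta>)) = \<delta> / N" using N d by (simp add: exp_minus ln_div exp_diff)
  finally show ?thesis unfolding t_def s_def \<mu>_def L_def .
qed

lemma fmax_meas:
  fixes X :: "'a \<Rightarrow> nat \<Rightarrow> real"
  assumes Xm[measurable]: "\<And>k. (\<lambda>\<omega>. X \<omega> k) \<in> borel_measurable M"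
    and Ym: "\<And>k. {\<omega> \<in> space M. k \<in> Y \<omega>} \<in> sets M"
    and Ysub: "\<And>\<omega>. \<omega> \<in> space M \<Longrightarrow> Y \<omega> \<subseteq> {1..K}"
  shows "(\<lambda>\<omega>. fmax (X \<omega>) (Y \<omega>) V) \<in> borel_measurable M"
proof -
  have Yp[measurable]: "\<And>k. Measurable.pred M (\<lambda>\<omega>. k \<in> Y \<omega>)" using Ym by (simp add: pred_def)
  have p[measurable]: "Measurable.pred M (\<lambda>\<omega>. S = Y \<omega>)" if S: "S \<in> Pow {1..K}" for S
  proof -
    have pre: "Measurable.pred M (\<lambda>\<omega>. \<forall>k\<in>{1..K}. (k\<in>S) = (k \<in> Y \<omega>))" by measurable
    have eq: "\<And>\<omega>. \<omega> \<in> space M \<Longrightarrow> (\<forall>k\<in>{1..K}. (k\<in>S) = (k \<in> Y \<omega>)) = (S = Y \<omega>)"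
      using S Ysub by blast
    show ?thesis by (rule iffD1[OF measurable_cong pre]) (rule eq)
  qed
  have msum: "(\<lambda>\<omega>. \<Sum>S\<in>Pow {1..K}. if S = Y \<omega> then Max ((\<lambda>k. X \<omega> k + V k) ` S) else 0) \<in> borel_measurable M"
  proof (rule borel_measurable_sum)
    fix S assume S: "S \<in> Pow {1..K}"
    have fS: "finite S" using S finite_subset by auto
    have "(\<lambda>\<omega>. Max ((\<lambda>k. X \<omega> k + V k) ` S)) \<in> borel_measurable M"
      using borel_measurable_Max[of S "\<lambda>k \<omega>. X \<omega> k + V k" M] fS by simp
    then show "(\<lambda>\<omega>. if S = Y \<omega> then Max ((\<lambda>k. X \<omega> k + V k) ` S) else 0) \<in> borel_measurable M"
      using p[OF S] by (intro measurable_If) auto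
  qed
  have eq2: "\<And>\<omega>. \<omega> \<in> space M \<Longrightarrow> (\<Sum>S\<in>Pow {1..K}. if S = Y \<omega> then Max ((\<lambda>k. X \<omega> k + V k) ` S) else 0)
     = fmax (X \<omega>) (Y \<omega>) V"
    using Ysub by (subst sum.delta) (auto simp: fmax_def)
  show ?thesis by (rule iffD1[OF measurable_cong msum]) (rule eq2)
qed

lemma fmax_mono:
  assumes "finite y" "\<And>k. k \<in> y \<Longrightarrow> V k \<le> W k"
  shows "fmax x y V \<le> fmax x y W"
proof (cases "y = {}")
  case False
  show ?thesis unfolding fmax_def using assms False
  proof (subst Max_le_iff)
    show "\<forall>a\<in>(\<lambda>k. x k + V k) ` y. a \<le> Max ((\<lambda>k. x k + W k) ` y)"
    proof
      fix a assume "a \<in> (\<lambda>k. x k + V k) ` y"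
      then obtain k where k: "k \<in> y" "a = x k + V k" by auto
      have "x k + W k \<le> Max ((\<lambda>k. x k + W k) ` y)" using k assms by (intro Max_ge) auto
      then show "a \<le> Max ((\<lambda>k. x k + W k) ` y)" using k assms(2)[of k] by linarith
    qed
  qed (use assms False in auto)
qed (simp add: fmax_def)

lemma fmax_shift:
  assumes "finite y" "0 \<le> e" "\<And>k. k \<in> y \<Longrightarrow> W k \<le> V k + e"
  shows "fmax x y W \<le> fmax x y V + e"
proof (cases "y = {}")
  case False
  have "Max ((\<lambda>k. x k + W k) ` y) \<le> Max ((\<lambda>k. x k + V k) ` y) + e"
  proof (subst Max_le_iff)
    show "\<forall>a\<in>(\<lambda>k. x k + W k) ` y. a \<le> Max ((\<lambda>k. x k + V k) ` y) + e"
    proof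
      fix a assume "a \<in> (\<lambda>k. x k + W k) ` y"
      then obtain k where k: "k \<in> y" "a = x k + W k" by auto
      have "x k + V k \<le> Max ((\<lambda>k. x k + V k) ` y)" using k assms by (intro Max_ge) auto
      then show "a \<le> Max ((\<lambda>k. x k + V k) ` y) + e" using k assms(3)[of k] by linarith
    qed
  qed (use assms False in auto)
  then show ?thesis by (simp add: fmax_def)
qed (use assms in \<open>simp add: fmax_def\<close>)

theorem lemma7:
  fixes M :: "'a measure" and X :: "'a \<Rightarrow> nat \<Rightarrow> real" and Y :: "'a \<Rightarrow> nat set"
    and K n :: nat and C \<delta> \<alpha> :: real and V0 :: "nat \<Rightarrow> real"
  assumes "prob_space M"
    and "C > 0" and "n \<ge> 1"
    and "\<And>k. (\<lambda>\<omega>. X \<omega> k) \<in> borel_measurable M"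
    and "\<And>k. {\<omega> \<in> space M. k \<in> Y \<omega>} \<in> sets M"
    and "\<And>\<omega> k. \<omega> \<in> space M \<Longrightarrow> k \<in> {1..K} \<Longrightarrow> 0 \<le> X \<omega> k \<and> X \<omega> k \<le> C"
    and "\<And>\<omega>. \<omega> \<in> space M \<Longrightarrow> Y \<omega> \<subseteq> {1..K}"
    and "AE \<omega> in M. Y \<omega> \<noteq> {}"
    and "0 < \<delta>" and "\<delta> < 1" and "0 < \<alpha>" and "\<alpha> \<le> 1"
  shows "\<exists>E \<in> sets (PiM {1..n} (\<lambda>_. M)).
           measure (PiM {1..n} (\<lambda>_. M)) E \<ge> 1 - \<delta> \<and>
           (\<forall>\<omega> \<in> E. \<forall>V :: nat \<Rightarrow> real.
              (\<forall>k \<in> {1..K}. 0 \<le> V k - V0 k \<and> V k - V0 k \<le> C) \<longrightarrow>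
              (1 / real n) * (\<Sum>i = 1..n. dfmax (X (\<omega> i)) (Y (\<omega> i)) V V0)
                \<le> (1 + \<alpha>) * (\<integral>\<xi>. dfmax (X \<xi>) (Y \<xi>) V V0 \<partial>M)
                  + 2 * C * real K * ln (3 * real n / \<delta>) / (\<alpha> * real n))"
  proof -
  interpret M: prob_space M by (rule assms(1))
  let ?P = "PiM {1..n} (\<lambda>_. M)"
  interpret P: prob_space ?P by (rule prob_space_PiM) (rule assms(1))
  define R where "R = 2 * C * real K * ln (3 * real n / \<delta>) / (\<alpha> * real n)"
  have Cp: "C > 0" using assms(2) .
  have fin: "\<And>\<omega>. \<omega> \<in> space M \<Longrightarrow> finite (Y \<omega>)"
    using assms(7) finite_subset by blast
  have mono: "dfmax (X \<omega>) (Y \<omega>) V V0 \<le> dfmax (X \<omega>) (Y \<omega>) W V0"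
    if "\<omega> \<in> space M" "\<forall>k\<in>{1..K}. V k \<le> W k" for \<omega> V W
    using fmax_mono[of "Y \<omega>" V W "X \<omega>"] that fin assms(7)[of \<omega>] by (auto simp: dfmax_def)
  have shift: "dfmax (X \<omega>) (Y \<omega>) W V0 \<le> dfmax (X \<omega>) (Y \<omega>) V V0 + e"
    if "\<omega> \<in> space M" "0 \<le> e" "\<forall>k\<in>{1..K}. W k \<le> V k + e" for \<omega> V W e
    using fmax_shift[of "Y \<omega>" e W V "X \<omega>"] that fin assms(7)[of \<omega>] by (auto simp: dfmax_def)
  have dfb: "0 \<le> dfmax (X \<omega>) (Y \<omega>) V V0 \<and> dfmax (X \<omega>) (Y \<omega>) V V0 \<le> C"
    if "\<omega> \<in> space M" "\<forall>k\<in>{1..K}. 0 \<le> V k - V0 k \<and> V k - V0 k \<le> C" for \<omega> V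
  proof
    have "dfmax (X \<omega>) (Y \<omega>) V0 V0 \<le> dfmax (X \<omega>) (Y \<omega>) V V0"
      using that by (intro mono) auto
    then show "0 \<le> dfmax (X \<omega>) (Y \<omega>) V V0" by (simp add: dfmax_def)
    have "dfmax (X \<omega>) (Y \<omega>) V V0 \<le> dfmax (X \<omega>) (Y \<omega>) V0 V0 + C"
      using that Cp by (intro shift) auto
    then show "dfmax (X \<omega>) (Y \<omega>) V V0 \<le> C" by (simp add: dfmax_def)
  qed
  have dfm[measurable]: "(\<lambda>\<xi>. dfmax (X \<xi>) (Y \<xi>) V V0) \<in> borel_measurable M" for V
    unfolding dfmax_def by (intro borel_measurable_diff fmax_meas[OF assms(4,5,7)])
  have dfint: "integrable M (\<lambda>\<xi>. dfmax (X \<xi>) (Y \<xi>) V V0)"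
    if "\<forall>k\<in>{1..K}. 0 \<le> V k - V0 k \<and> V k - V0 k \<le> C" for V
    by (rule M.integrable_const_bound[where B=C]) (use dfb[OF _ that] in \<open>auto intro!: AE_I2\<close>)
  have K1: "K \<ge> 1"
  proof (rule ccontr)
    assume "\<not> K \<ge> 1"
    then have "\<And>\<omega>. \<omega> \<in> space M \<Longrightarrow> Y \<omega> = {}" using assms(7) by fastforce
    then have "AE \<omega> in M. False" using assms(8) by (auto elim!: AE_mp intro!: AE_I2)
    then show False using M.AE_False by simp
  qed
  have spc: "\<And>\<omega> i. \<omega> \<in> space ?P \<Longrightarrow> i \<in> {1..n} \<Longrightarrow> \<omega> i \<in> space M"
    by (auto simp: space_PiM PiE_def Pi_def)
  show ?thesis
  proof (cases "C \<le> R")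
    case True
    show ?thesis
    proof (intro bexI conjI ballI allI impI)
      show "space ?P \<in> sets ?P" by simp
      have "measure ?P (space ?P) = 1" by (rule P.prob_space)
      then show "1 - \<delta> \<le> measure ?P (space ?P)" using assms(9) by linarith
      fix \<omega> V assume \<omega>: "\<omega> \<in> space ?P" and V: "\<forall>k\<in>{1..K}. 0 \<le> V k - V0 k \<and> V k - V0 k \<le> C"
      have "(\<Sum>i = 1..n. dfmax (X (\<omega> i)) (Y (\<omega> i)) V V0) \<le> (\<Sum>i = 1..n. C)"
        using dfb[OF spc[OF \<omega>] V] by (intro sum_mono) auto
      then have "(1 / real n) * (\<Sum>i = 1..n. dfmax (X (\<omega> i)) (Y (\<omega> i)) V V0) \<le> (1 / real n) * (real n * C)"
        by (intro mult_left_mono) auto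
      also have "\<dots> = C" using assms(3) by simp
      also have "C \<le> (1 + \<alpha>) * (\<integral>\<xi>. dfmax (X \<xi>) (Y \<xi>) V V0 \<partial>M) + R"
      proof -
        have "0 \<le> (\<integral>\<xi>. dfmax (X \<xi>) (Y \<xi>) V V0 \<partial>M)"
          using dfb[OF _ V] by (intro integral_nonneg_AE AE_I2) auto
        then have "0 \<le> (1 + \<alpha>) * (\<integral>\<xi>. dfmax (X \<xi>) (Y \<xi>) V V0 \<partial>M)"
          using assms(11) by simp
        then show ?thesis using True by linarith
      qed
      finally show "(1 / real n) * (\<Sum>i = 1..n. dfmax (X (\<omega> i)) (Y (\<omega> i)) V V0)
          \<le> (1 + \<alpha>) * (\<integral>\<xi>. dfmax (X \<xi>) (Y \<xi>) V V0 \<partial>M) + 2 * C * real K * ln (3 * real n / \<delta>) / (\<alpha> * real n)"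
        unfolding R_def .
    qed
  next
    case False
    have n3: "n \<ge> 3"
    proof (rule ccontr)
      assume "\<not> n \<ge> 3"
      then have n2: "real n \<le> 2" by simp
      have "exp 1 \<le> 3 * real n / \<delta>"
      proof -
        have "exp (1::real) \<le> 3" by (rule exp_le)
        also have "3 \<le> 3 * real n" using assms(3) by simp
        also have "\<dots> \<le> 3 * real n / \<delta>" using assms(9,10,3)
          by (simp add: le_divide_eq)
        finally show ?thesis .
      qed
      then have l1: "1 \<le> ln (3 * real n / \<delta>)" using assms(9,3) by (subst ln_ge_iff) auto
      have a2: "\<alpha> * real n \<le> 2 * real K"
      proof -
        have "\<alpha> * real n \<le> 1 * 2" using assms(11,12) n2 by (intro mult_mono) auto
        then show ?thesis using K1 by simp
      qed
      have "C \<le> C * (2 * real K / (\<alpha> * real n)) * ln (3 * real n / \<delta>)"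
      proof -
        have "1 \<le> 2 * real K / (\<alpha> * real n)" using a2 assms(11,3) by (simp add: field_simps)
        then have "1 * 1 \<le> (2 * real K / (\<alpha> * real n)) * ln (3 * real n / \<delta>)"
          using l1 by (intro mult_mono) auto
        then have "1 \<le> (2 * real K / (\<alpha> * real n)) * ln (3 * real n / \<delta>)" by simp
        then have "C * 1 \<le> C * ((2 * real K / (\<alpha> * real n)) * ln (3 * real n / \<delta>))"
          using Cp by (intro mult_left_mono) auto
        then show ?thesis by (simp only: mult_1_right mult.assoc)
      qed
      then have "C \<le> R" unfolding R_def by (simp add: field_simps)
      then show False using False by simp
    qed
    define q where "q = 2 * n"
    have qpos: "real q > 0" using assms(3) by (simp add: q_def)
    define J where "J = PiE {1..K} (\<lambda>_. {0..q})"
    define gr where "gr = (\<lambda>(j::nat \<Rightarrow> nat) k. if k \<in> {1..K} then V0 k + C * real (j k) / real q else V0 k)"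
    define G where "G = gr ` J"
    define N where "N = real ((q+1)^K)"
    have finG: "finite G" unfolding G_def J_def by (intro finite_imageI finite_PiE) auto
    have cardG: "real (card G) \<le> N"
    proof -
      have "card G \<le> card J" unfolding G_def by (rule card_image_le) (simp add: J_def finite_PiE)
      also have "card J = (q+1)^K" by (simp add: J_def card_PiE)
      finally have "card G \<le> (q+1)^K" .
      then have "real (card G) \<le> real ((q+1)^K)" by (rule of_nat_mono)
      then show ?thesis by (simp only: N_def)
    qed
    have Npos: "N > 0" by (simp add: N_def)
    have gcon: "\<forall>k\<in>{1..K}. 0 \<le> g k - V0 k \<and> g k - V0 k \<le> C" if "g \<in> G" for g
    proof -
      obtain j where j: "j \<in> J" "g = gr j" using \<open>g \<in> G\<close> by (auto simp: G_def)
      show ?thesis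
      proof
        fix k assume k: "k \<in> {1..K}"
        then have "j k \<le> q" using j by (auto simp: J_def PiE_def Pi_def)
        then have "real (j k) / real q \<le> 1" using qpos by simp
        then have "C * (real (j k) / real q) \<le> C * 1" using Cp by (intro mult_left_mono) auto
        then show "0 \<le> g k - V0 k \<and> g k - V0 k \<le> C" using k j Cp qpos by (simp add: gr_def)
      qed
    qed
    define Z where "Z = (\<lambda>g \<xi>. dfmax (X \<xi>) (Y \<xi>) g V0)"
    define s where "s = C * ln (N / \<delta>) / ln (1 + \<alpha>)"
    define Bad where "Bad = (\<lambda>g. {\<omega> \<in> space ?P. (\<Sum>i\<in>{1..n}. Z g (\<omega> i)) >
        real (card {1..n}) * (1+\<alpha>) * (\<integral>\<xi>. Z g \<xi> \<partial>M) + s})"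
    have Badm: "Bad g \<in> sets ?P" for g
      proof -
      have "(\<lambda>\<omega>. \<Sum>i\<in>{1..n}. Z g (\<omega> i)) \<in> borel_measurable ?P"
      proof (rule borel_measurable_sum)
        fix i assume "i \<in> {1..n}"
        then show "(\<lambda>\<omega>. Z g (\<omega> i)) \<in> borel_measurable ?P"
          unfolding Z_def
          by (rule measurable_compose[OF measurable_component_singleton[where M="\<lambda>_. M"] dfm[of g]])
      qed
      then show ?thesis unfolding Bad_def by (intro borel_measurable_less) auto
    qed
    have Badp: "measure ?P (Bad g) \<le> \<delta> / N" if "g \<in> G" for g
      unfolding Bad_def s_def
      by (rule chernoff[OF assms(1)]) (use dfb gcon[OF that] Cp assms(11,9) Npos in \<open>auto simp: Z_def\<close>)
    define E where "E = space ?P - (\<Union>g\<in>G. Bad g)"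
    show ?thesis
    proof (intro bexI conjI ballI allI impI)
      show Em: "E \<in> sets ?P" unfolding E_def using finG Badm by auto
      have "measure ?P (\<Union>g\<in>G. Bad g) \<le> (\<Sum>g\<in>G. measure ?P (Bad g))"
        using finG Badm by (intro measure_UNION_le) auto
      also have "\<dots> \<le> real (card G) * (\<delta> / N)" using Badp by (intro sum_bounded_above) auto
      also have "\<dots> \<le> N * (\<delta> / N)" using cardG assms(9) Npos by (intro mult_right_mono) auto
      also have "\<dots> = \<delta>" using Npos by simp
      finally have "measure ?P (\<Union>g\<in>G. Bad g) \<le> \<delta>" .
      moreover have "measure ?P E = 1 - measure ?P (\<Union>g\<in>G. Bad g)"
        unfolding E_def using finG Badm by (intro P.prob_compl) auto
      ultimately show "1 - \<delta> \<le> measure ?P E" by simp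
      fix \<omega> V assume \<omega>E: "\<omega> \<in> E" and V: "\<forall>k\<in>{1..K}. 0 \<le> V k - V0 k \<and> V k - V0 k \<le> C"
      have \<omega>: "\<omega> \<in> space ?P" using \<omega>E by (simp add: E_def)
      define j where "j = (\<lambda>k. if k \<in> {1..K} then nat \<lceil>(V k - V0 k) * real q / C\<rceil> else undefined)"
      have jk: "real (j k) = of_int \<lceil>(V k - V0 k) * real q / C\<rceil>
              \<and> (V k - V0 k) * real q / C \<le> of_int \<lceil>(V k - V0 k) * real q / C\<rceil>
              \<and> of_int \<lceil>(V k - V0 k) * real q / C\<rceil> < (V k - V0 k) * real q / C + 1
              \<and> j k \<le> q" if k: "k \<in> {1..K}" for k
      proof -
        define t where "t = (V k - V0 k) * real q / C"
        have t0: "0 \<le> t" using V k Cp qpos by (auto simp: t_def)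
        have tq: "t \<le> real q"
        proof -
          have "(V k - V0 k) * real q \<le> C * real q" using V k qpos by (intro mult_right_mono) auto
          then show ?thesis using Cp by (simp add: t_def divide_le_eq mult.commute)
        qed
        have c0: "0 \<le> \<lceil>t\<rceil>" using t0 by simp
        have cq: "\<lceil>t\<rceil> \<le> int q" using tq by (simp add: ceiling_le_iff)
        have jd: "j k = nat \<lceil>t\<rceil>" using k by (simp add: j_def t_def)
        have r1: "real (j k) = of_int \<lceil>t\<rceil>" using c0 jd by simp
        have r2: "t \<le> of_int \<lceil>t\<rceil>" by (rule le_of_int_ceiling)
        have r3: "of_int \<lceil>t\<rceil> < t + 1" using ceiling_correct[of t] by linarith
        have r4: "j k \<le> q" using jd cq tq by simp
        show ?thesis using r1 r2 r3 r4 by (simp only: t_def)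
      qed
      define g where "g = gr j"
      have jJ: "j \<in> J"
        unfolding J_def PiE_iff
      proof (intro conjI ballI)
        fix k :: nat assume k: "k \<in> {1..K}"
        show "j k \<in> {0..q}" using jk[OF k] by simp
      next
        show "j \<in> extensional {1..K}" by (simp add: j_def extensional_def)
      qed
      have gG: "g \<in> G" using jJ by (simp add: G_def g_def)
      have Vg: "\<forall>k\<in>{1..K}. V k \<le> g k"
      proof
        fix k assume k: "k \<in> {1..K}"
        have "(V k - V0 k) * real q / C \<le> real (j k)" using jk[OF k] by simp
        then have "V k - V0 k \<le> C * real (j k) / real q" using Cp qpos by (simp add: field_simps)
        then show "V k \<le> g k" using k by (simp add: g_def gr_def)
      qed
      have gV: "\<forall>k\<in>{1..K}. g k \<le> V k + C / real q"
      proof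
        fix k assume k: "k \<in> {1..K}"
        have "real (j k) \<le> (V k - V0 k) * real q / C + 1" using jk[OF k] by simp
        then have "C * real (j k) / real q \<le> V k - V0 k + C / real q" using Cp qpos by (simp add: field_simps)
        then show "g k \<le> V k + C / real q" using k by (simp add: g_def gr_def)
      qed
      have notbad: "\<omega> \<notin> Bad g" using \<omega>E gG by (auto simp: E_def)
      have sumg: "(\<Sum>i\<in>{1..n}. Z g (\<omega> i)) \<le> real n * (1+\<alpha>) * (\<integral>\<xi>. Z g \<xi> \<partial>M) + s"
        using notbad \<omega> by (auto simp: Bad_def not_less)
      have sumV: "(\<Sum>i = 1..n. dfmax (X (\<omega> i)) (Y (\<omega> i)) V V0) \<le> (\<Sum>i\<in>{1..n}. Z g (\<omega> i))"
        unfolding Z_def using spc[OF \<omega>] Vg by (intro sum_mono mono) auto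
      have intg: "(\<integral>\<xi>. Z g \<xi> \<partial>M) \<le> (\<integral>\<xi>. dfmax (X \<xi>) (Y \<xi>) V V0 \<partial>M) + C / real q"
      proof -
        have "(\<integral>\<xi>. Z g \<xi> \<partial>M) \<le> (\<integral>\<xi>. dfmax (X \<xi>) (Y \<xi>) V V0 + C / real q \<partial>M)"
          unfolding Z_def using dfint[OF gcon[OF gG]] dfint[OF V] gV qpos Cp
          by (intro integral_mono shift) auto
        also have "\<dots> = (\<integral>\<xi>. dfmax (X \<xi>) (Y \<xi>) V V0 \<partial>M) + C / real q"
          using dfint[OF V] by (simp add: M.prob_space)
        finally show ?thesis .
      qed
      have "(1 / real n) * (\<Sum>i = 1..n. dfmax (X (\<omega> i)) (Y (\<omega> i)) V V0)
          \<le> (1 / real n) * (real n * (1+\<alpha>) * (\<integral>\<xi>. Z g \<xi> \<partial>M) + s)"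
        using sumV sumg by (intro mult_left_mono) auto
      also have "\<dots> = (1+\<alpha>) * (\<integral>\<xi>. Z g \<xi> \<partial>M) + s / real n"
        using assms(3) by (simp add: field_simps)
      also have "\<dots> \<le> (1+\<alpha>) * ((\<integral>\<xi>. dfmax (X \<xi>) (Y \<xi>) V V0 \<partial>M) + C / real q) + s / real n"
        using intg assms(11) by (intro add_right_mono mult_left_mono) auto
      also have "\<dots> = (1+\<alpha>) * (\<integral>\<xi>. dfmax (X \<xi>) (Y \<xi>) V V0 \<partial>M)
           + ((1+\<alpha>) * (C / real (2*n)) + C * ln (real ((2*n+1)^K) / \<delta>) / ln (1+\<alpha>) / real n)"
        by (simp add: s_def N_def q_def algebra_simps)
      also have "\<dots> \<le> (1+\<alpha>) * (\<integral>\<xi>. dfmax (X \<xi>) (Y \<xi>) V V0 \<partial>M)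
           + 2 * C * real K * ln (3 * real n / \<delta>) / (\<alpha> * real n)"
        using final_arith[OF Cp assms(11,12,9,10) K1 n3] by linarith
      finally show "(1 / real n) * (\<Sum>i = 1..n. dfmax (X (\<omega> i)) (Y (\<omega> i)) V V0)
          \<le> (1 + \<alpha>) * (\<integral>\<xi>. dfmax (X \<xi>) (Y \<xi>) V V0 \<partial>M) + 2 * C * real K * ln (3 * real n / \<delta>) / (\<alpha> * real n)" .
    qed
  qed
qed

end
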